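(* Let $K$ be a semiring, $G$ a finite group and $M$ a $K[G]$-module. Suppose $M$ is weakly reflexive as a $K$-module and $M^\vee$ is finitely generated (as a $K$-module). Then $M$ is isomorphic to a $K[G]$-submodule of $K[G]^n$ for some $n$.
   Context: Semirings are commutative; $K[G]$ is the group semiring. $M^\vee=\mathrm{Hom}_K(M,K)$, which carries the right $G$-action $(\phi g)(x)=\phi(gx)$. $M$ is weakly reflexive if the canonical map $M\to M^{\vee\vee}$, $x\mapsto(\psi\mapsto\psi(x))$, is injective. *)

theory Defs
  imports "HOL-Algebra.Group"
begin

text \<open>Elements of K[G] are functions G -> K (vanishing outside the carrier);
  since G is finite these are exactly the finite formal K-combinations of group elements.\<close>

definition group_semiring :: "('g, 'b) monoid_scheme \<Rightarrow> ('g \<Rightarrow> 'k::comm_semiring_1) set" where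
  "group_semiring G = {f. \<forall>x. x \<notin> carrier G \<longrightarrow> f x = 0}"

definition gs_add :: "('g \<Rightarrow> 'k::comm_semiring_1) \<Rightarrow> ('g \<Rightarrow> 'k) \<Rightarrow> ('g \<Rightarrow> 'k)" where
  "gs_add f h = (\<lambda>x. f x + h x)"

definition gs_zero :: "'g \<Rightarrow> 'k::comm_semiring_1" where
  "gs_zero = (\<lambda>x. 0)"

definition gs_mult :: "('g, 'b) monoid_scheme \<Rightarrow> ('g \<Rightarrow> 'k::comm_semiring_1) \<Rightarrow> ('g \<Rightarrow> 'k) \<Rightarrow> ('g \<Rightarrow> 'k)" where
  "gs_mult G f h = (\<lambda>x. if x \<in> carrier G
      then (\<Sum>y\<in>carrier G. f y * h (inv\<^bsub>G\<^esub> y \<otimes>\<^bsub>G\<^esub> x)) else 0)"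

text \<open>The element k * 1_G of K[G]; gs_scalar G 1 is the unit of K[G].\<close>
definition gs_scalar :: "('g, 'b) monoid_scheme \<Rightarrow> 'k::comm_semiring_1 \<Rightarrow> ('g \<Rightarrow> 'k)" where
  "gs_scalar G k = (\<lambda>x. if x = \<one>\<^bsub>G\<^esub> then k else 0)"

definition is_semimodule ::
  "'r set \<Rightarrow> ('r \<Rightarrow> 'r \<Rightarrow> 'r) \<Rightarrow> ('r \<Rightarrow> 'r \<Rightarrow> 'r) \<Rightarrow> 'r \<Rightarrow> 'r
   \<Rightarrow> ('r \<Rightarrow> 'm::comm_monoid_add \<Rightarrow> 'm) \<Rightarrow> bool" where
  "is_semimodule R pl tm zr on smul \<longleftrightarrow>
     (\<forall>r\<in>R. \<forall>x y. smul r (x + y) = smul r x + smul r y) \<and>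
     (\<forall>r\<in>R. \<forall>s\<in>R. \<forall>x. smul (pl r s) x = smul r x + smul s x) \<and>
     (\<forall>r\<in>R. \<forall>s\<in>R. \<forall>x. smul (tm r s) x = smul r (smul s x)) \<and>
     (\<forall>x. smul on x = x) \<and>
     (\<forall>x. smul zr x = 0) \<and>
     (\<forall>r\<in>R. smul r 0 = 0)"

definition is_KG_module :: "('g, 'b) monoid_scheme \<Rightarrow> (('g \<Rightarrow> 'k::comm_semiring_1) \<Rightarrow> 'm::comm_monoid_add \<Rightarrow> 'm) \<Rightarrow> bool" where
  "is_KG_module G act \<longleftrightarrow>
     is_semimodule (group_semiring G) gs_add (gs_mult G) gs_zero (gs_scalar G 1) act"

text \<open>Restriction of scalars along K -> K[G], k |-> k 1_G.\<close>
definition K_smul :: "('g, 'b) monoid_scheme \<Rightarrow> (('g \<Rightarrow> 'k::comm_semiring_1) \<Rightarrow> 'm \<Rightarrow> 'm) \<Rightarrow> 'k \<Rightarrow> 'm \<Rightarrow> 'm" where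
  "K_smul G act k x = act (gs_scalar G k) x"

definition K_dual :: "('g, 'b) monoid_scheme \<Rightarrow> (('g \<Rightarrow> 'k::comm_semiring_1) \<Rightarrow> 'm::comm_monoid_add \<Rightarrow> 'm) \<Rightarrow> ('m \<Rightarrow> 'k) set" where
  "K_dual G act = {\<psi>. (\<forall>x y. \<psi> (x + y) = \<psi> x + \<psi> y) \<and>
                      (\<forall>k x. \<psi> (K_smul G act k x) = k * \<psi> x)}"

definition canonical_bidual_map :: "('g, 'b) monoid_scheme \<Rightarrow> (('g \<Rightarrow> 'k::comm_semiring_1) \<Rightarrow> 'm::comm_monoid_add \<Rightarrow> 'm) \<Rightarrow> 'm \<Rightarrow> (('m \<Rightarrow> 'k) \<Rightarrow> 'k)" where
  "canonical_bidual_map G act x = (\<lambda>\<psi>\<in>K_dual G act. \<psi> x)"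

definition weakly_reflexive :: "('g, 'b) monoid_scheme \<Rightarrow> (('g \<Rightarrow> 'k::comm_semiring_1) \<Rightarrow> 'm::comm_monoid_add \<Rightarrow> 'm) \<Rightarrow> bool" where
  "weakly_reflexive G act \<longleftrightarrow> inj (canonical_bidual_map G act)"

definition dual_fin_gen :: "('g, 'b) monoid_scheme \<Rightarrow> (('g \<Rightarrow> 'k::comm_semiring_1) \<Rightarrow> 'm::comm_monoid_add \<Rightarrow> 'm) \<Rightarrow> bool" where
  "dual_fin_gen G act \<longleftrightarrow>
     (\<exists>S. finite S \<and> S \<subseteq> K_dual G act \<and>
          (\<forall>\<psi>\<in>K_dual G act. \<exists>c. \<psi> = (\<lambda>x. \<Sum>s\<in>S. c s * s x)))"

text \<open>K[G]^n: tuples (v_0, ..., v_(n-1)) of elements of K[G], encoded as functions on nat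
  vanishing from index n on; K[G] acts componentwise by left multiplication.\<close>
definition free_KG :: "('g, 'b) monoid_scheme \<Rightarrow> nat \<Rightarrow> (nat \<Rightarrow> 'g \<Rightarrow> 'k::comm_semiring_1) set" where
  "free_KG G n = {v. (\<forall>i<n. v i \<in> group_semiring G) \<and> (\<forall>i\<ge>n. v i = gs_zero)}"

definition free_act :: "('g, 'b) monoid_scheme \<Rightarrow> ('g \<Rightarrow> 'k::comm_semiring_1) \<Rightarrow> (nat \<Rightarrow> 'g \<Rightarrow> 'k) \<Rightarrow> (nat \<Rightarrow> 'g \<Rightarrow> 'k)" where
  "free_act G a v = (\<lambda>i. gs_mult G a (v i))"

definition KG_submodule_of_free :: "('g, 'b) monoid_scheme \<Rightarrow> nat \<Rightarrow> (nat \<Rightarrow> 'g \<Rightarrow> 'k::comm_semiring_1) set \<Rightarrow> bool" where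
  "KG_submodule_of_free G n N \<longleftrightarrow>
     N \<subseteq> free_KG G n \<and> (\<lambda>i. gs_zero) \<in> N \<and>
     (\<forall>v\<in>N. \<forall>w\<in>N. (\<lambda>i. gs_add (v i) (w i)) \<in> N) \<and>
     (\<forall>a\<in>group_semiring G. \<forall>v\<in>N. free_act G a v \<in> N)"

definition KG_iso_onto :: "('g, 'b) monoid_scheme \<Rightarrow> (('g \<Rightarrow> 'k::comm_semiring_1) \<Rightarrow> 'm::comm_monoid_add \<Rightarrow> 'm)
    \<Rightarrow> ('m \<Rightarrow> nat \<Rightarrow> 'g \<Rightarrow> 'k) \<Rightarrow> (nat \<Rightarrow> 'g \<Rightarrow> 'k) set \<Rightarrow> bool" where
  "KG_iso_onto G act \<phi> N \<longleftrightarrow>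
     bij_betw \<phi> UNIV N \<and>
     (\<forall>x y. \<phi> (x + y) = (\<lambda>i. gs_add (\<phi> x i) (\<phi> y i))) \<and>
     \<phi> 0 = (\<lambda>i. gs_zero) \<and>
     (\<forall>a\<in>group_semiring G. \<forall>x. \<phi> (act a x) = free_act G a (\<phi> x))"

end

theory Submission imports Defs begin

definition dl :: "('g, 'b) monoid_scheme \<Rightarrow> 'g \<Rightarrow> 'g \<Rightarrow> 'k::comm_semiring_1" where
  "dl G g = (\<lambda>x. if x = g then 1 else 0)"

lemma sum_dl_left:
  assumes "finite A" "g \<in> A"
  shows "(\<Sum>y\<in>A. (if y = g then (c::'k::comm_semiring_1) else 0) * f y) = c * f g"
proof -
  have "(\<Sum>y\<in>A. (if y = g then c else 0) * f y) = (\<Sum>y\<in>A. if y = g then c * f y else 0)"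
    by (rule sum.cong) auto
  also have "\<dots> = c * f g" using assms by (simp add: sum.delta)
  finally show ?thesis .
qed

lemma dl_in: "g \<in> carrier G \<Longrightarrow> dl G g \<in> group_semiring G"
  by (auto simp: dl_def group_semiring_def)

lemma gs_mult_in: "gs_mult G a b \<in> group_semiring G"
  by (auto simp: gs_mult_def group_semiring_def)

lemma gs_mult_at: "x \<in> carrier G \<Longrightarrow> gs_mult G a b x = (\<Sum>y\<in>carrier G. a y * b (inv\<^bsub>G\<^esub> y \<otimes>\<^bsub>G\<^esub> x))"
  by (simp add: gs_mult_def)

lemma gs_mult_dl_left:
  assumes "group G" "finite (carrier G)" "h \<in> carrier G" "x \<in> carrier G"
  shows "gs_mult G (dl G h) a x = (a (inv\<^bsub>G\<^esub> h \<otimes>\<^bsub>G\<^esub> x) :: 'k::comm_semiring_1)"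
proof -
  have "gs_mult G (dl G h) a x = (1::'k) * a (inv\<^bsub>G\<^esub> h \<otimes>\<^bsub>G\<^esub> x)"
    unfolding gs_mult_at[OF assms(4)] dl_def by (rule sum_dl_left) (use assms in auto)
  then show ?thesis by simp
qed

lemma gs_mult_dl_dl:
  assumes "group G" "finite (carrier G)" "a \<in> carrier G" "b \<in> carrier G"
  shows "gs_mult G (dl G a) (dl G b) = (dl G (a \<otimes>\<^bsub>G\<^esub> b) :: 'g \<Rightarrow> 'k::comm_semiring_1)"
proof
  fix x
  show "gs_mult G (dl G a) (dl G b) x = (dl G (a \<otimes>\<^bsub>G\<^esub> b) :: 'g \<Rightarrow> 'k) x"
  proof (cases "x \<in> carrier G")
    case True
    interpret group G by fact
    have "gs_mult G (dl G a) (dl G b) x = (dl G b (inv\<^bsub>G\<^esub> a \<otimes>\<^bsub>G\<^esub> x) :: 'k)"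
      by (rule gs_mult_dl_left) (use assms True in auto)
    also have "\<dots> = dl G (a \<otimes>\<^bsub>G\<^esub> b) x"
    proof -
      have "(inv\<^bsub>G\<^esub> a \<otimes>\<^bsub>G\<^esub> x = b) = (x = a \<otimes>\<^bsub>G\<^esub> b)" using True assms
        by (metis inv_solve_left)
      then show ?thesis by (simp add: dl_def)
    qed
    finally show ?thesis .
  next
    case False
    interpret group G by fact
    show ?thesis using False assms by (auto simp: gs_mult_def dl_def)
  qed
qed

lemma gs_mult_scalar_dl:
  assumes "group G" "finite (carrier G)" "g \<in> carrier G"
  shows "gs_mult G (gs_scalar G k) (dl G g) = (\<lambda>x. k * (dl G g x :: 'k::comm_semiring_1))"
proof
  fix x
  show "gs_mult G (gs_scalar G k) (dl G g) x = k * dl G g x"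
  proof (cases "x \<in> carrier G")
    case True
    have "gs_mult G (gs_scalar G k) (dl G g) x = k * dl G g (inv\<^bsub>G\<^esub> \<one>\<^bsub>G\<^esub> \<otimes>\<^bsub>G\<^esub> x)"
      unfolding gs_mult_at[OF True] gs_scalar_def by (rule sum_dl_left) (use assms group.is_monoid in auto)
    interpret group G by fact
    show ?thesis using True assms \<open>gs_mult G (gs_scalar G k) (dl G g) x = _\<close> by simp
  next
    case False
    then show ?thesis using assms by (auto simp: gs_mult_def dl_def)
  qed
qed


lemma additive_sum:
  assumes "\<And>x y. \<psi> (x + y) = \<psi> x + \<psi> y" "\<psi> 0 = 0"
  shows "\<psi> (sum v T) = (\<Sum>g\<in>T. \<psi> (v g))"
proof (cases "finite T")
  case True
  then show ?thesis by (induction T rule: finite_induct) (auto simp: assms)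
qed (simp add: assms)

lemma dual_zero:
  fixes G :: "('g, 'b) monoid_scheme" and act :: "('g \<Rightarrow> 'k::comm_semiring_1) \<Rightarrow> 'm::comm_monoid_add \<Rightarrow> 'm"
  assumes "\<psi> \<in> K_dual G act" "\<forall>x. act gs_zero x = 0"
  shows "\<psi> 0 = 0"
proof -
  have "gs_scalar G 0 = (gs_zero :: 'g \<Rightarrow> 'k::comm_semiring_1)" by (auto simp: gs_scalar_def gs_zero_def)
  then have "K_smul G act 0 0 = 0" using assms(2) by (simp add: K_smul_def)
  then have "\<psi> 0 = 0 * \<psi> 0" using assms(1) unfolding K_dual_def by (metis (mono_tags, lifting) mem_Collect_eq)
  then show ?thesis by simp
qed


lemma act_decomp:
  fixes G :: "'g monoid" and act :: "('g \<Rightarrow> 'k::comm_semiring_1) \<Rightarrow> 'm::comm_monoid_add \<Rightarrow> 'm"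
  assumes grp: "group G" and fin: "finite (carrier G)" and md: "is_KG_module G act"
    and b: "b \<in> group_semiring G" and psi: "\<psi> \<in> K_dual G act"
  shows "\<psi> (act b x) = (\<Sum>g\<in>carrier G. b g * \<psi> (act (dl G g) x))"
proof -
  interpret group G by fact
  note ax = md[unfolded is_KG_module_def is_semimodule_def]
  have pl: "\<And>r s x. r \<in> group_semiring G \<Longrightarrow> s \<in> group_semiring G \<Longrightarrow> act (gs_add r s) x = act r x + act s x"
    using ax by blast
  have tm: "\<And>r s x. r \<in> group_semiring G \<Longrightarrow> s \<in> group_semiring G \<Longrightarrow> act (gs_mult G r s) x = act r (act s x)"
    using ax by blast
  have zr: "\<forall>x. act gs_zero x = 0" using ax by blast
  have sc_in: "\<And>k. gs_scalar G k \<in> group_semiring G"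
    by (auto simp: gs_scalar_def group_semiring_def)
  have psi0: "\<psi> 0 = 0" by (rule dual_zero[OF psi zr])
  have psiadd: "\<And>x y. \<psi> (x + y) = \<psi> x + \<psi> y" using psi by (simp add: K_dual_def)
  have psik: "\<And>k x. \<psi> (K_smul G act k x) = k * \<psi> x" using psi by (simp add: K_dual_def)
  have T: "act (\<lambda>y. if y \<in> T then b y else 0) x = (\<Sum>g\<in>T. act (gs_mult G (gs_scalar G (b g)) (dl G g)) x)"
    if "T \<subseteq> carrier G" for T
  proof -
    have "finite T" using that fin finite_subset by blast
    then show ?thesis using that
    proof (induction T rule: finite_induct)
      case empty
      have "(\<lambda>y. if y \<in> {} then b y else 0) = gs_zero" by (simp add: gs_zero_def)
      then show ?case using zr by simp
    next
      case (insert g T)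
      have g: "g \<in> carrier G" using insert by auto
      have eq: "(\<lambda>y. if y \<in> insert g T then b y else 0) =
          gs_add (gs_mult G (gs_scalar G (b g)) (dl G g)) (\<lambda>y. if y \<in> T then b y else 0)"
        using insert(2) unfolding gs_mult_scalar_dl[OF grp fin g] by (auto simp: gs_add_def dl_def)
      have inR: "(\<lambda>y. if y \<in> T then b y else 0) \<in> group_semiring G"
        using insert(4) by (auto simp: group_semiring_def)
      show ?case unfolding eq pl[OF gs_mult_in inR] using insert by simp
    qed
  qed
  have "(\<lambda>y. if y \<in> carrier G then b y else 0) = b" using b by (auto simp: group_semiring_def)
  then have "act b x = (\<Sum>g\<in>carrier G. act (gs_mult G (gs_scalar G (b g)) (dl G g)) x)"
    using T[of "carrier G"] by simp
  then have "\<psi> (act b x) = (\<Sum>g\<in>carrier G. \<psi> (act (gs_mult G (gs_scalar G (b g)) (dl G g)) x))"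
    using additive_sum[of \<psi>, OF psiadd psi0] by simp
  also have "\<dots> = (\<Sum>g\<in>carrier G. b g * \<psi> (act (dl G g) x))"
  proof (rule sum.cong)
    fix g assume g: "g \<in> carrier G"
    show "\<psi> (act (gs_mult G (gs_scalar G (b g)) (dl G g)) x) = b g * \<psi> (act (dl G g) x)"
      using tm[OF sc_in dl_in[OF g]] psik by (simp add: K_smul_def)
  qed simp
  finally show ?thesis .
qed


lemma grp_c1: "group G \<Longrightarrow> h \<in> carrier G \<Longrightarrow> g \<in> carrier G \<Longrightarrow> inv\<^bsub>G\<^esub> h \<otimes>\<^bsub>G\<^esub> (h \<otimes>\<^bsub>G\<^esub> g) = g"
  by (metis group.inv_solve_left group.inv_closed monoid.m_closed group.is_monoid)
lemma grp_c2: "group G \<Longrightarrow> h \<in> carrier G \<Longrightarrow> g \<in> carrier G \<Longrightarrow> h \<otimes>\<^bsub>G\<^esub> (inv\<^bsub>G\<^esub> h \<otimes>\<^bsub>G\<^esub> g) = g"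
  by (metis group.inv_solve_left group.inv_closed monoid.m_closed group.is_monoid)
lemma grp_c3: "group G \<Longrightarrow> h \<in> carrier G \<Longrightarrow> g \<in> carrier G \<Longrightarrow> inv\<^bsub>G\<^esub> (inv\<^bsub>G\<^esub> g \<otimes>\<^bsub>G\<^esub> h) = inv\<^bsub>G\<^esub> h \<otimes>\<^bsub>G\<^esub> g"
  by (simp add: group.inv_mult_group)

theorem proposition4p8:
  fixes G :: "'g monoid"
    and act :: "('g \<Rightarrow> 'k::comm_semiring_1) \<Rightarrow> 'm::comm_monoid_add \<Rightarrow> 'm"
  assumes "group G"
    and "finite (carrier G)"
    and "is_KG_module G act"
    and "weakly_reflexive G act"
    and "dual_fin_gen G act"
  shows "\<exists>n::nat. \<exists>N \<phi>. KG_submodule_of_free G n N \<and> KG_iso_onto G act \<phi> N"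
proof -
  note grp = assms(1) and fin = assms(2) and md = assms(3)
  interpret group G by fact
  note ax = md[unfolded is_KG_module_def is_semimodule_def]
  have addx: "\<And>r x y. r \<in> group_semiring G \<Longrightarrow> act r (x + y) = act r x + act r y"
    using ax by blast
  have tm: "\<And>r s x. r \<in> group_semiring G \<Longrightarrow> s \<in> group_semiring G \<Longrightarrow> act (gs_mult G r s) x = act r (act s x)"
    using ax by blast
  have on: "\<And>x. act (gs_scalar G 1) x = x" using ax by blast
  have zr: "\<forall>x. act gs_zero x = 0" using ax by blast
  have r0: "\<And>r. r \<in> group_semiring G \<Longrightarrow> act r 0 = 0" using ax by blast
  obtain S where S: "finite S" "S \<subseteq> K_dual G act"
    and Sgen: "\<forall>\<psi>\<in>K_dual G act. \<exists>c. \<psi> = (\<lambda>x. \<Sum>s\<in>S. c s * s x)"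
    using assms(5) unfolding dual_fin_gen_def by blast
  define n where "n = card S"
  obtain f where f: "bij_betw f {0..<n} S" using ex_bij_betw_nat_finite[OF S(1)] n_def by blast
  have fi: "f i \<in> K_dual G act" if "i < n" for i
    using f S(2) that by (auto simp: bij_betw_def)
  have fadd: "f i (x + y) = f i x + f i y" if "i < n" for i x y
    using fi[OF that] by (simp add: K_dual_def)
  have f0: "f i 0 = 0" if "i < n" for i
    using dual_zero[OF fi[OF that] zr] .
  define Phi :: "'m \<Rightarrow> nat \<Rightarrow> 'g \<Rightarrow> 'k" where "Phi x = (\<lambda>i. if i < n then (\<lambda>h. if h \<in> carrier G
      then f i (act (dl G (inv\<^bsub>G\<^esub> h)) x) else 0) else gs_zero)" for x
  have Phi_add: "Phi (x + y) = (\<lambda>i. gs_add (Phi x i) (Phi y i))" for x y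
    by (rule ext, rule ext) (auto simp: Phi_def gs_add_def gs_zero_def addx dl_in fadd)
  have Phi_zero: "Phi 0 = (\<lambda>i. gs_zero)"
    by (rule ext, rule ext) (auto simp: Phi_def gs_zero_def r0 dl_in f0)
  have Phi_act: "Phi (act a x) = free_act G a (Phi x)" if a: "a \<in> group_semiring G" for a x
  proof (rule ext, rule ext)
    fix i h
    show "Phi (act a x) i h = free_act G a (Phi x) i h"
    proof (cases "i < n \<and> h \<in> carrier G")
      case True
      then have i: "i < n" and h: "h \<in> carrier G" by auto
      have "Phi (act a x) i h = f i (act (dl G (inv\<^bsub>G\<^esub> h)) (act a x))"
        using True by (simp add: Phi_def)
      also have "\<dots> = f i (act (gs_mult G (dl G (inv\<^bsub>G\<^esub> h)) a) x)"
        using tm[OF dl_in a] h by simp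
      also have "\<dots> = (\<Sum>g\<in>carrier G. gs_mult G (dl G (inv\<^bsub>G\<^esub> h)) a g * f i (act (dl G g) x))"
        by (rule act_decomp[OF grp fin md gs_mult_in fi[OF i]])
      also have "\<dots> = (\<Sum>g\<in>carrier G. a (h \<otimes>\<^bsub>G\<^esub> g) * f i (act (dl G g) x))"
        by (rule sum.cong) (simp_all add: gs_mult_dl_left[OF grp fin] h)
      also have "\<dots> = (\<Sum>y\<in>carrier G. a y * f i (act (dl G (inv\<^bsub>G\<^esub> h \<otimes>\<^bsub>G\<^esub> y)) x))"
        by (rule sum.reindex_bij_witness[where i = "\<lambda>y. inv\<^bsub>G\<^esub> h \<otimes>\<^bsub>G\<^esub> y" and j = "\<lambda>g. h \<otimes>\<^bsub>G\<^esub> g"])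
           (use h in \<open>simp_all add: grp_c1[OF grp] grp_c2[OF grp]\<close>)
      also have "\<dots> = (\<Sum>y\<in>carrier G. a y * Phi x i (inv\<^bsub>G\<^esub> y \<otimes>\<^bsub>G\<^esub> h))"
        by (rule sum.cong) (use i h in \<open>simp_all add: Phi_def grp_c3[OF grp]\<close>)
      also have "\<dots> = free_act G a (Phi x) i h"
        using h by (simp add: free_act_def gs_mult_def)
      finally show ?thesis .
    next
      case False
      then show ?thesis
        by (auto simp: Phi_def free_act_def gs_mult_def gs_zero_def)
    qed
  qed
  have dl1: "dl G \<one>\<^bsub>G\<^esub> = gs_scalar G 1" by (simp add: dl_def gs_scalar_def fun_eq_iff)
  have "inj Phi"
  proof (rule injI)
    fix x y assume eq: "Phi x = Phi y"
    have "f i x = f i y" if "i < n" for i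
    proof -
      have "Phi x i \<one>\<^bsub>G\<^esub> = Phi y i \<one>\<^bsub>G\<^esub>" using eq by simp
      then show ?thesis using that by (simp add: Phi_def dl1 on)
    qed
    then have sxy: "s x = s y" if "s \<in> S" for s
      using f that by (auto simp: bij_betw_def)
    have "\<psi> x = \<psi> y" if psiK: "\<psi> \<in> K_dual G act" for \<psi>
    proof -
      obtain c where c: "\<psi> = (\<lambda>x. \<Sum>s\<in>S. c s * s x)" using bspec[OF Sgen psiK] by (elim exE)
      have "(\<Sum>s\<in>S. c s * s x) = (\<Sum>s\<in>S. c s * s y)" by (rule sum.cong) (simp_all add: sxy)
      then show ?thesis by (subst c)+ simp
    qed
    then have "canonical_bidual_map G act x = canonical_bidual_map G act y"
      unfolding canonical_bidual_map_def by (rule restrict_ext)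
    then show "x = y" using assms(4) by (simp add: weakly_reflexive_def inj_def)
  qed
  have sub: "KG_submodule_of_free G n (range Phi)"
    unfolding KG_submodule_of_free_def
  proof (intro conjI ballI)
    show "range Phi \<subseteq> free_KG G n"
      by (auto simp: free_KG_def Phi_def group_semiring_def)
    show "(\<lambda>i. gs_zero) \<in> range Phi" using Phi_zero[symmetric] by simp
  next
    fix v w assume "v \<in> range Phi" "w \<in> range Phi"
    then obtain x y where "v = Phi x" "w = Phi y" by blast
    then show "(\<lambda>i. gs_add (v i) (w i)) \<in> range Phi" using Phi_add[of x y, symmetric] by simp
  next
    fix a :: "'g \<Rightarrow> 'k" and v assume aR: "a \<in> group_semiring G" and "v \<in> range Phi"
    then obtain x where "v = Phi x" by blast
    then show "free_act G a v \<in> range Phi" using Phi_act[OF aR, of x, symmetric] by simp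
  qed
  have "KG_iso_onto G act Phi (range Phi)"
    unfolding KG_iso_onto_def using \<open>inj Phi\<close> Phi_add Phi_zero Phi_act
    by (simp add: bij_betw_def)
  then show ?thesis using sub by blast
qed

end
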